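(* For every LCNF formula $\Phi$ and every variable $x$, $\mathsf{MCS}(\mathsf{bve}(\Phi, x)) = \mathsf{MCS}(\Phi)$.
   Context: Fix a countable set $Lbls$ of labels. A labelled clause $C^L$ is a pair of a clause $C$ (a finite set of literals) and a finite set $L \subseteq Lbls$. An LCNF formula $\Phi$ is a finite set of labelled clauses; $Cls(\Phi) = \{C : C^L \in \Phi\}$ and $Lbls(\Phi) = \bigcup_{C^L\in\Phi} L$. $\Phi$ is satisfiable iff $Cls(\Phi)$ is. For $M \subseteq Lbls(\Phi)$, the induced subformula is $\Phi|_M = \{C^L \in \Phi : L \subseteq M\}$. A set $R \subseteq Lbls(\Phi)$ is an MCS of $\Phi$ if (i) $\Phi|_{Lbls(\Phi)\setminus R}$ is satisfiable and (ii) for every $l \in R$, $\Phi|_{(Lbls(\Phi)\setminus R)\cup\{l\}}$ is unsatisfiable; $\mathsf{MCS}(\Phi)$ is the set of all MCSes of $\Phi$. The resolvent of $(x \vee A)^{L_1}$ and $(\neg x \vee B)^{L_2}$ on $x$ is $(A \vee B)^{L_1\cup L_2}$. For an LCNF $\Phi$, let $\Phi_x$ (resp. $\Phi_{\neg x}$) be the set of its labelled clauses containing the literal $x$ (resp. $\neg x$), and $\Phi_x \otimes_x \Phi_{\neg x}$ the set of all resolvents on $x$ of a clause of $\Phi_x$ with a clause of $\Phi_{\neg x}$. Define $\mathsf{ve}(\Phi,x) = (\Phi \setminus (\Phi_x \cup \Phi_{\neg x})) \cup (\Phi_x \otimes_x \Phi_{\neg x})$ and $\mathsf{bve}(\Phi,x)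 = \mathsf{ve}(\Phi,x)$ if $|\mathsf{ve}(\Phi,x)| < |\Phi|$ (number of labelled clauses), and $\mathsf{bve}(\Phi,x) = \Phi$ otherwise. *)

theory Defs
  imports "HOL-Library.Countable"
begin

datatype 'v lit = Pos 'v | Neg 'v

fun lit_val :: "('v \<Rightarrow> bool) \<Rightarrow> 'v lit \<Rightarrow> bool" where
  "lit_val \<sigma> (Pos v) = \<sigma> v"
| "lit_val \<sigma> (Neg v) = (\<not> \<sigma> v)"

type_synonym 'v clause = "'v lit set"
type_synonym ('v, 'l) lclause = "'v clause \<times> 'l set"
type_synonym ('v, 'l) lcnf = "('v, 'l) lclause set"

definition is_lcnf :: "('v, 'l) lcnf \<Rightarrow> bool" where
  "is_lcnf \<Phi> \<longleftrightarrow> finite \<Phi> \<and> (\<forall>(C, L) \<in> \<Phi>. finite C \<and> finite L)"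

definition Cls :: "('v, 'l) lcnf \<Rightarrow> 'v clause set" where
  "Cls \<Phi> = fst ` \<Phi>"

definition Lbls :: "('v, 'l) lcnf \<Rightarrow> 'l set" where
  "Lbls \<Phi> = \<Union> (snd ` \<Phi>)"

definition cnf_sat :: "'v clause set \<Rightarrow> bool" where
  "cnf_sat S \<longleftrightarrow> (\<exists>\<sigma>. \<forall>C \<in> S. \<exists>l \<in> C. lit_val \<sigma> l)"

definition lsat :: "('v, 'l) lcnf \<Rightarrow> bool" where
  "lsat \<Phi> \<longleftrightarrow> cnf_sat (Cls \<Phi>)"

definition induced :: "('v, 'l) lcnf \<Rightarrow> 'l set \<Rightarrow> ('v, 'l) lcnf" where
  "induced \<Phi> M = {(C, L) \<in> \<Phi>. L \<subseteq> M}"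

definition is_MCS :: "('v, 'l) lcnf \<Rightarrow> 'l set \<Rightarrow> bool" where
  "is_MCS \<Phi> R \<longleftrightarrow> R \<subseteq> Lbls \<Phi>
     \<and> lsat (induced \<Phi> (Lbls \<Phi> - R))
     \<and> (\<forall>l \<in> R. \<not> lsat (induced \<Phi> ((Lbls \<Phi> - R) \<union> {l})))"

definition MCS :: "('v, 'l) lcnf \<Rightarrow> 'l set set" where
  "MCS \<Phi> = {R. is_MCS \<Phi> R}"

text \<open>Resolvent of (x \/ A)^L1 and (~x \/ B)^L2 on x is (A \/ B)^(L1 \<union> L2).\<close>
definition resolvent :: "'v \<Rightarrow> ('v, 'l) lclause \<Rightarrow> ('v, 'l) lclause \<Rightarrow> ('v, 'l) lclause" where
  "resolvent x c1 c2 = ((fst c1 - {Pos x}) \<union> (fst c2 - {Neg x}), snd c1 \<union> snd c2)"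

definition occ :: "('v, 'l) lcnf \<Rightarrow> 'v lit \<Rightarrow> ('v, 'l) lcnf" where
  "occ \<Phi> lt = {c \<in> \<Phi>. lt \<in> fst c}"

definition ve :: "('v, 'l) lcnf \<Rightarrow> 'v \<Rightarrow> ('v, 'l) lcnf" where
  "ve \<Phi> x = (\<Phi> - (occ \<Phi> (Pos x) \<union> occ \<Phi> (Neg x)))
     \<union> {resolvent x c1 c2 | c1 c2. c1 \<in> occ \<Phi> (Pos x) \<and> c2 \<in> occ \<Phi> (Neg x)}"

definition bve :: "('v, 'l) lcnf \<Rightarrow> 'v \<Rightarrow> ('v, 'l) lcnf" where
  "bve \<Phi> x = (if card (ve \<Phi> x) < card \<Phi> then ve \<Phi> x else \<Phi>)"

end

theory Submission
  imports Defs
begin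

lemma lit_val_upd: "l \<noteq> Pos x \<Longrightarrow> l \<noteq> Neg x \<Longrightarrow> lit_val (\<sigma>(x:=b)) l = lit_val \<sigma> l"
  by (cases l) auto

lemma induced_mem: "c \<in> induced \<Phi> M \<longleftrightarrow> c \<in> \<Phi> \<and> snd c \<subseteq> M"
  unfolding induced_def by (cases c) auto
lemma ve_mem: "c \<in> ve \<Phi> x \<longleftrightarrow> (c \<in> \<Phi> \<and> Pos x \<notin> fst c \<and> Neg x \<notin> fst c)
   \<or> (\<exists>c1 c2. c1 \<in> \<Phi> \<and> Pos x \<in> fst c1 \<and> c2 \<in> \<Phi> \<and> Neg x \<in> fst c2 \<and> c = resolvent x c1 c2)"
  unfolding ve_def occ_def by blast
lemma snd_res: "snd (resolvent x c1 c2) = snd c1 \<union> snd c2"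
  unfolding resolvent_def by simp
lemma induced_ve: "induced (ve \<Phi> x) M = ve (induced \<Phi> M) x"
proof (rule set_eqI)
  fix c
  show "c \<in> induced (ve \<Phi> x) M \<longleftrightarrow> c \<in> ve (induced \<Phi> M) x"
  proof
    assume "c \<in> induced (ve \<Phi> x) M"
    then have h: "c \<in> ve \<Phi> x" "snd c \<subseteq> M" unfolding induced_mem by auto
    from h(1)[unfolded ve_mem] show "c \<in> ve (induced \<Phi> M) x"
    proof (elim disjE exE conjE)
      assume "c \<in> \<Phi>" "Pos x \<notin> fst c" "Neg x \<notin> fst c"
      then show ?thesis unfolding ve_mem induced_mem using h(2) by blast
    next
      fix c1 c2 assume a: "c1 \<in> \<Phi>" "Pos x \<in> fst c1" "c2 \<in> \<Phi>" "Neg x \<in> fst c2" "c = resolvent x c1 c2"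
      then have "snd c1 \<subseteq> M" "snd c2 \<subseteq> M" using h(2) unfolding a(5) snd_res by auto
      then show ?thesis unfolding ve_mem induced_mem using a by blast
    qed
  next
    assume "c \<in> ve (induced \<Phi> M) x"
    from this[unfolded ve_mem induced_mem] show "c \<in> induced (ve \<Phi> x) M"
    proof (elim disjE exE conjE)
      fix c1 c2 assume a: "c1 \<in> \<Phi>" "Pos x \<in> fst c1" "c2 \<in> \<Phi>" "Neg x \<in> fst c2" "c = resolvent x c1 c2"
        "snd c1 \<subseteq> M" "snd c2 \<subseteq> M"
      then have "snd c \<subseteq> M" unfolding a(5) snd_res by auto
      then show ?thesis using a unfolding induced_mem ve_mem by blast
    qed (auto simp: induced_mem ve_mem)
  qed
qed
lemma Lbls_ve: "Lbls (ve \<Phi> x) \<subseteq> Lbls \<Phi>"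
proof
  fix l assume "l \<in> Lbls (ve \<Phi> x)"
  then obtain c where c: "c \<in> ve \<Phi> x" "l \<in> snd c" unfolding Lbls_def by blast
  show "l \<in> Lbls \<Phi>"
  proof (cases "c \<in> \<Phi>")
    case True then show ?thesis using c unfolding Lbls_def by blast
  next
    case False
    then obtain c1 c2 where "c1 \<in> \<Phi>" "c2 \<in> \<Phi>" "c = resolvent x c1 c2"
      using c(1) unfolding ve_def occ_def by blast
    then show ?thesis using c(2) unfolding Lbls_def resolvent_def by auto
  qed
qed
lemma induced_Int: "induced \<Psi> M = induced \<Psi> (M \<inter> Lbls \<Psi>)"
  unfolding induced_def Lbls_def by fastforce

lemma sat_ve1:
  assumes "lsat \<Psi>" shows "lsat (ve \<Psi> x)"
proof -
  from assms obtain \<sigma> where s: "\<forall>C \<in> Cls \<Psi>. \<exists>l \<in> C. lit_val \<sigma> l"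
    unfolding lsat_def cnf_sat_def by blast
  have "\<forall>C \<in> Cls (ve \<Psi> x). \<exists>l \<in> C. lit_val \<sigma> l"
  proof
    fix C assume "C \<in> Cls (ve \<Psi> x)"
    then obtain L where cl: "(C, L) \<in> ve \<Psi> x" unfolding Cls_def by force
    show "\<exists>l \<in> C. lit_val \<sigma> l"
    proof (cases "(C, L) \<in> \<Psi>")
      case True then show ?thesis using s unfolding Cls_def by force
    next
      case False
      then obtain c1 c2 where c: "c1 \<in> \<Psi>" "Pos x \<in> fst c1" "c2 \<in> \<Psi>" "Neg x \<in> fst c2"
        "(C, L) = resolvent x c1 c2"
        using cl unfolding ve_def occ_def by auto
      from s c obtain l1 where l1: "l1 \<in> fst c1" "lit_val \<sigma> l1" unfolding Cls_def by force
      from s c obtain l2 where l2: "l2 \<in> fst c2" "lit_val \<sigma> l2" unfolding Cls_def by force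
      show ?thesis
      proof (cases "l1 = Pos x")
        case True
        then have "l2 \<noteq> Neg x" using l1 l2 by auto
        then show ?thesis using c(5) l2 unfolding resolvent_def by auto
      next
        case False
        then show ?thesis using c(5) l1 unfolding resolvent_def by auto
      qed
    qed
  qed
  then show ?thesis unfolding lsat_def cnf_sat_def by blast
qed

lemma sat_ve2:
  assumes "lsat (ve \<Psi> x)" shows "lsat \<Psi>"
proof -
  from assms obtain \<sigma> where s: "\<forall>C \<in> Cls (ve \<Psi> x). \<exists>l \<in> C. lit_val \<sigma> l"
    unfolding lsat_def cnf_sat_def by blast
  have other: "\<exists>l \<in> fst c. lit_val (\<sigma>(x:=b)) l"
    if "c \<in> \<Psi>" "Pos x \<notin> fst c" "Neg x \<notin> fst c" for c b
  proof -
    have "c \<in> ve \<Psi> x" using that unfolding ve_def occ_def by auto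
    then obtain l where "l \<in> fst c" "lit_val \<sigma> l" using s unfolding Cls_def by force
    then show ?thesis using that lit_val_upd[of l x] by metis
  qed
  show ?thesis
  proof (cases "\<forall>c1 \<in> \<Psi>. Pos x \<in> fst c1 \<longrightarrow> Neg x \<notin> fst c1 \<longrightarrow> (\<exists>l \<in> fst c1 - {Pos x}. lit_val \<sigma> l)")
    case True
    have "\<forall>C \<in> Cls \<Psi>. \<exists>l \<in> C. lit_val (\<sigma>(x:=False)) l"
    proof
      fix C assume "C \<in> Cls \<Psi>"
      then obtain c where c: "c \<in> \<Psi>" "C = fst c" unfolding Cls_def by auto
      show "\<exists>l \<in> C. lit_val (\<sigma>(x:=False)) l"
      proof (cases "Neg x \<in> C")
        case True then show ?thesis by force
      next
        case nn: False
        show ?thesis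
        proof (cases "Pos x \<in> C")
          case True
          then obtain l where "l \<in> C - {Pos x}" "lit_val \<sigma> l" using \<open>\<forall>c1 \<in> \<Psi>. _\<close> c nn by blast
          then show ?thesis using nn lit_val_upd[of l x] by (metis DiffE insertI1)
        next
          case False then show ?thesis using other c nn by blast
        qed
      qed
    qed
    then show ?thesis unfolding lsat_def cnf_sat_def by blast
  next
    case False
    then obtain c1 where c1: "c1 \<in> \<Psi>" "Pos x \<in> fst c1" "Neg x \<notin> fst c1"
      "\<forall>l \<in> fst c1 - {Pos x}. \<not> lit_val \<sigma> l" by blast
    have "\<forall>C \<in> Cls \<Psi>. \<exists>l \<in> C. lit_val (\<sigma>(x:=True)) l"
    proof
      fix C assume "C \<in> Cls \<Psi>"
      then obtain c where c: "c \<in> \<Psi>" "C = fst c" unfolding Cls_def by auto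
      show "\<exists>l \<in> C. lit_val (\<sigma>(x:=True)) l"
      proof (cases "Pos x \<in> C")
        case True then show ?thesis by force
      next
        case np: False
        show ?thesis
        proof (cases "Neg x \<in> C")
          case True
          have "resolvent x c1 c \<in> ve \<Psi> x" unfolding ve_def occ_def
            using c1 c True by blast
          then obtain l where l: "l \<in> fst (resolvent x c1 c)" "lit_val \<sigma> l"
            using s unfolding Cls_def by force
          then have "l \<in> C - {Neg x}" using c1 c unfolding resolvent_def by auto
          then show ?thesis using np l lit_val_upd[of l x] by (metis DiffE insertI1)
        next
          case False then show ?thesis using other c np by blast
        qed
      qed
    qed
    then show ?thesis unfolding lsat_def cnf_sat_def by blast
  qed
qed

lemma MCS_transfer:
  assumes f: "\<And>M. lsat (induced \<Psi> M) = lsat (induced \<Phi> M)"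
    and sub: "Lbls \<Psi> \<subseteq> Lbls \<Phi>"
  shows "MCS \<Psi> = MCS \<Phi>"
proof -
  define A where "A = Lbls \<Phi>"
  define B where "B = Lbls \<Psi>"
  have g: "lsat (induced \<Phi> M) = lsat (induced \<Phi> (M \<inter> B))" for M
    using f[of M] f[of "M \<inter> B"] induced_Int[of \<Psi> M] unfolding B_def by simp
  have BA: "B \<subseteq> A" using sub A_def B_def by simp
  show ?thesis
  proof (intro set_eqI iffI)
    fix R assume "R \<in> MCS \<Psi>"
    then have R: "R \<subseteq> B" "lsat (induced \<Phi> (B - R))"
      "\<forall>l \<in> R. \<not> lsat (induced \<Phi> ((B - R) \<union> {l}))"
      unfolding MCS_def is_MCS_def B_def using f by auto
    have e1: "(A - R) \<inter> B = B - R" using BA by auto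
    have e2: "((A - R) \<union> {l}) \<inter> B = (B - R) \<union> {l}" if "l \<in> R" for l
      using BA R(1) that by auto
    have "lsat (induced \<Phi> (A - R))" using g[of "A - R"] e1 R(2) by simp
    moreover have "\<forall>l \<in> R. \<not> lsat (induced \<Phi> ((A - R) \<union> {l}))"
    proof
      fix l assume "l \<in> R"
      then show "\<not> lsat (induced \<Phi> ((A - R) \<union> {l}))"
        using g[of "(A - R) \<union> {l}"] e2[of l] R(3) by simp
    qed
    ultimately show "R \<in> MCS \<Phi>" unfolding MCS_def is_MCS_def A_def[symmetric] using R(1) BA by blast
  next
    fix R assume "R \<in> MCS \<Phi>"
    then have R: "R \<subseteq> A" "lsat (induced \<Phi> (A - R))"
      "\<forall>l \<in> R. \<not> lsat (induced \<Phi> ((A - R) \<union> {l}))"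
      unfolding MCS_def is_MCS_def A_def by auto
    have RB: "R \<subseteq> B"
    proof
      fix l assume l: "l \<in> R"
      show "l \<in> B"
      proof (rule ccontr)
        assume "l \<notin> B"
        then have "((A - R) \<union> {l}) \<inter> B = (A - R) \<inter> B" by auto
        then have "lsat (induced \<Phi> ((A - R) \<union> {l}))"
          using g[of "(A - R) \<union> {l}"] g[of "A - R"] R(2) by simp
        then show False using R(3) l by blast
      qed
    qed
    have e1: "(A - R) \<inter> B = B - R" using BA by auto
    have e2: "((A - R) \<union> {l}) \<inter> B = (B - R) \<union> {l}" if "l \<in> R" for l
      using BA RB that by auto
    have "lsat (induced \<Psi> (B - R))" using f[of "B - R"] g[of "A - R"] e1 R(2) by simp
    moreover have "\<forall>l \<in> R. \<not> lsat (induced \<Psi> ((B - R) \<union> {l}))"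
    proof
      fix l assume "l \<in> R"
      then show "\<not> lsat (induced \<Psi> ((B - R) \<union> {l}))"
        using f[of "(B - R) \<union> {l}"] g[of "(A - R) \<union> {l}"] e2[of l] R(3) by simp
    qed
    ultimately show "R \<in> MCS \<Psi>" unfolding MCS_def is_MCS_def B_def[symmetric] using RB by blast
  qed
qed

theorem proposition2:
  fixes \<Phi> :: "('v, 'l :: countable) lcnf" and x :: 'v
  assumes "is_lcnf \<Phi>"
  shows "MCS (bve \<Phi> x) = MCS \<Phi>"
proof -
  have eq: "lsat (induced (ve \<Phi> x) M) = lsat (induced \<Phi> M)" for M
  proof -
    have "induced (ve \<Phi> x) M = ve (induced \<Phi> M) x" by (rule induced_ve)
    then show ?thesis using sat_ve1[of "induced \<Phi> M" x] sat_ve2[of "induced \<Phi> M" x] by argo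
  qed
  have "MCS (ve \<Phi> x) = MCS \<Phi>"
    by (rule MCS_transfer[OF eq Lbls_ve])
  then show ?thesis unfolding bve_def by (cases "card (ve \<Phi> x) < card \<Phi>") auto
qed

end
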